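(* Let $G=(V,E)$ be a graph with arboricity $\alpha$, let $\mu$ be an orientation of its edges with out-degree at most $2\alpha$, let $h\le\log\alpha$, and consider Procedure Oriented Edge-Coloring$(G,\mu,h)$. For every $0\le i\le h$, every graph $G^{(i)}$ computed after $i$ levels of recursion, and every $v\in V$, $$\frac{\mathrm{indeg}(v)}{2^i}-1\le\mathrm{indeg}^{(i)}(v)\le\frac{\mathrm{indeg}(v)}{2^i}+1\quad\text{and}\quad\frac{\mathrm{outdeg}(v)}{2^i}-1\le\mathrm{outdeg}^{(i)}(v)\le\frac{\mathrm{outdeg}(v)}{2^i}+1,$$ where $\mathrm{indeg},\mathrm{outdeg}$ are taken in $G$ and $\mathrm{indeg}^{(i)},\mathrm{outdeg}^{(i)}$ in $G^{(i)}$, with respect to $\mu$.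
   Context: Logarithms are base 2. The arboricity of $G$ is $\max_{S\subseteq V,|S|\ge2}\lceil |E(G[S])|/(|S|-1)\rceil$. An oriented degree-splitting of $(H,\mu)$ with discrepancy $\kappa$ is a partition $(E_1,E_2)$ of $E(H)$ such that for every vertex $v$, the numbers of incoming edges of $v$ in $E_1$ and in $E_2$ differ by at most $\kappa$, and likewise for outgoing edges. Procedure Oriented Edge-Coloring$(H,\mu,h)$: if $h=0$, return a proper $(\Delta(H)+1)$-edge-coloring of $H$ from a base-case subroutine; otherwise compute an oriented degree-splitting $(E_1,E_2)$ of $(H,\mu)$ with discrepancy at most 1, recursively call Oriented Edge-Coloring$(H_1,\mu,h-1)$ and Oriented Edge-Coloring$(H_2,\mu,h-1)$ on $H_1=(V,E_1)$, $H_2=(V,E_2)$ (with the orientation induced by $\mu$), and merge the colorings using disjoint palettes. $G^{(0)}=G$, and a graph computed after $i$ levels of recursion is any $H_1$ or $H_2$ produced from a graph computed after $i-1$ levels. *)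

theory Defs
  imports Complex_Main
begin

definition simple_graph :: "'a set \<Rightarrow> 'a set set \<Rightarrow> bool" where
  "simple_graph V E \<longleftrightarrow> finite V \<and> (\<forall>e\<in>E. e \<subseteq> V \<and> card e = 2)"

definition orientation :: "'a set set \<Rightarrow> ('a set \<Rightarrow> 'a \<times> 'a) \<Rightarrow> bool" where
  "orientation E mu \<longleftrightarrow> (\<forall>e\<in>E. e = {fst (mu e), snd (mu e)})"

text \<open>Arboricity: max over S subset V with |S| >= 2 of ceil(|E(G[S])| / (|S|-1));
  taken to be 0 if V has fewer than 2 vertices (empty maximum).\<close>
definition arboricity :: "'a set \<Rightarrow> 'a set set \<Rightarrow> nat" where
  "arboricity V E = Max (insert 0
     {nat \<lceil>real (card {e\<in>E. e \<subseteq> S}) / real (card S - 1)\<rceil> | S. S \<subseteq> V \<and> card S \<ge> 2})"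

definition indeg :: "('a set \<Rightarrow> 'a \<times> 'a) \<Rightarrow> 'a set set \<Rightarrow> 'a \<Rightarrow> nat" where
  "indeg mu F v = card {e\<in>F. snd (mu e) = v}"

definition outdeg :: "('a set \<Rightarrow> 'a \<times> 'a) \<Rightarrow> 'a set set \<Rightarrow> 'a \<Rightarrow> nat" where
  "outdeg mu F v = card {e\<in>F. fst (mu e) = v}"

definition oriented_degree_splitting ::
  "'a set \<Rightarrow> ('a set \<Rightarrow> 'a \<times> 'a) \<Rightarrow> 'a set set \<Rightarrow> int \<Rightarrow> 'a set set \<Rightarrow> 'a set set \<Rightarrow> bool" where
  "oriented_degree_splitting V mu F kappa E1 E2 \<longleftrightarrow>
     E1 \<union> E2 = F \<and> E1 \<inter> E2 = {} \<and>
     (\<forall>v\<in>V. \<bar>int (indeg mu E1 v) - int (indeg mu E2 v)\<bar> \<le> kappa \<and>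
            \<bar>int (outdeg mu E1 v) - int (outdeg mu E2 v)\<bar> \<le> kappa)"

text \<open>Edge sets of graphs computed after i levels of recursion of
  Oriented Edge-Coloring(G, mu, h), started on G = (V,E); each recursive step
  uses an oriented degree-splitting with discrepancy at most 1.\<close>
inductive computed_at_level ::
  "'a set \<Rightarrow> 'a set set \<Rightarrow> ('a set \<Rightarrow> 'a \<times> 'a) \<Rightarrow> nat \<Rightarrow> 'a set set \<Rightarrow> bool"
  for V E mu where
  base: "computed_at_level V E mu 0 E"
| left: "computed_at_level V E mu i F \<Longrightarrow> oriented_degree_splitting V mu F 1 E1 E2
          \<Longrightarrow> computed_at_level V E mu (Suc i) E1"
| right: "computed_at_level V E mu i F \<Longrightarrow> oriented_degree_splitting V mu F 1 E1 E2
          \<Longrightarrow> computed_at_level V E mu (Suc i) E2"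

end

theory Submission
  imports Defs
begin

lemma card_split:
  assumes "finite F" "E1 \<union> E2 = F" "E1 \<inter> E2 = {}"
  shows "card {e\<in>F. P e} = card {e\<in>E1. P e} + card {e\<in>E2. P e}"
proof -
  have "{e\<in>F. P e} = {e\<in>E1. P e} \<union> {e\<in>E2. P e}" using assms by auto
  moreover have "finite {e\<in>E1. P e}" "finite {e\<in>E2. P e}" using assms by auto
  moreover have "{e\<in>E1. P e} \<inter> {e\<in>E2. P e} = {}" using assms by auto
  ultimately show ?thesis by (simp add: card_Un_disjoint)
qed

lemma half_step:
  fixes x :: real and a b c :: nat
  assumes "x - 1 \<le> real a" "real a \<le> x + 1" "a = b + c"
    "\<bar>int b - int c\<bar> \<le> 1"
  shows "x / 2 - 1 \<le> real b \<and> real b \<le> x / 2 + 1"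
proof -
  have "real b - real c \<le> 1" "real c - real b \<le> 1" using assms(4) by linarith+
  moreover have "real a = real b + real c" using assms(3) by simp
  ultimately show ?thesis using assms(1,2) by linarith
qed

lemma main_ind:
  assumes "computed_at_level V E mu i F" "finite E"
  shows "F \<subseteq> E \<and> (\<forall>v\<in>V.
         real (indeg mu E v) / 2 ^ i - 1 \<le> real (indeg mu F v) \<and>
         real (indeg mu F v) \<le> real (indeg mu E v) / 2 ^ i + 1 \<and>
         real (outdeg mu E v) / 2 ^ i - 1 \<le> real (outdeg mu F v) \<and>
         real (outdeg mu F v) \<le> real (outdeg mu E v) / 2 ^ i + 1)"
  using assms(1)
proof (induction rule: computed_at_level.induct)
  case base
  then show ?case by simp
next
  case (left i F E1 E2)
  have fF: "finite F" using left assms(2) finite_subset by blast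
  have sub: "E1 \<subseteq> E" using left unfolding oriented_degree_splitting_def by blast
  show ?case
  proof (intro conjI sub ballI)
    fix v assume v: "v \<in> V"
    have sp: "E1 \<union> E2 = F" "E1 \<inter> E2 = {}"
      and d1: "\<bar>int (indeg mu E1 v) - int (indeg mu E2 v)\<bar> \<le> 1"
      and d2: "\<bar>int (outdeg mu E1 v) - int (outdeg mu E2 v)\<bar> \<le> 1"
      using left(2) v unfolding oriented_degree_splitting_def by auto
    have ci: "indeg mu F v = indeg mu E1 v + indeg mu E2 v"
      unfolding indeg_def using card_split[OF fF sp] .
    have co: "outdeg mu F v = outdeg mu E1 v + outdeg mu E2 v"
      unfolding outdeg_def using card_split[OF fF sp] .
    have IH: "real (indeg mu E v) / 2 ^ i - 1 \<le> real (indeg mu F v)"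
         "real (indeg mu F v) \<le> real (indeg mu E v) / 2 ^ i + 1"
         "real (outdeg mu E v) / 2 ^ i - 1 \<le> real (outdeg mu F v)"
         "real (outdeg mu F v) \<le> real (outdeg mu E v) / 2 ^ i + 1"
      using left(3) v by auto
    have e: "real d / 2 ^ Suc i = (real d / 2 ^ i) / 2" for d by simp
    show "real (indeg mu E v) / 2 ^ Suc i - 1 \<le> real (indeg mu E1 v)"
         "real (indeg mu E1 v) \<le> real (indeg mu E v) / 2 ^ Suc i + 1"
      unfolding e using half_step[OF IH(1,2) ci d1] by auto
    show "real (outdeg mu E v) / 2 ^ Suc i - 1 \<le> real (outdeg mu E1 v)"
         "real (outdeg mu E1 v) \<le> real (outdeg mu E v) / 2 ^ Suc i + 1"
      unfolding e using half_step[OF IH(3,4) co d2] by auto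
  qed
next
  case (right i F E1 E2)
  have fF: "finite F" using right assms(2) finite_subset by blast
  have sub: "E2 \<subseteq> E" using right unfolding oriented_degree_splitting_def by blast
  show ?case
  proof (intro conjI sub ballI)
    fix v assume v: "v \<in> V"
    have sp: "E2 \<union> E1 = F" "E2 \<inter> E1 = {}"
      and d1: "\<bar>int (indeg mu E2 v) - int (indeg mu E1 v)\<bar> \<le> 1"
      and d2: "\<bar>int (outdeg mu E2 v) - int (outdeg mu E1 v)\<bar> \<le> 1"
      using right(2) v unfolding oriented_degree_splitting_def by auto
    have ci: "indeg mu F v = indeg mu E2 v + indeg mu E1 v"
      unfolding indeg_def using card_split[OF fF sp] .
    have co: "outdeg mu F v = outdeg mu E2 v + outdeg mu E1 v"
      unfolding outdeg_def using card_split[OF fF sp] .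
    have IH: "real (indeg mu E v) / 2 ^ i - 1 \<le> real (indeg mu F v)"
         "real (indeg mu F v) \<le> real (indeg mu E v) / 2 ^ i + 1"
         "real (outdeg mu E v) / 2 ^ i - 1 \<le> real (outdeg mu F v)"
         "real (outdeg mu F v) \<le> real (outdeg mu E v) / 2 ^ i + 1"
      using right(3) v by auto
    have e: "real d / 2 ^ Suc i = (real d / 2 ^ i) / 2" for d by simp
    show "real (indeg mu E v) / 2 ^ Suc i - 1 \<le> real (indeg mu E2 v)"
         "real (indeg mu E2 v) \<le> real (indeg mu E v) / 2 ^ Suc i + 1"
      unfolding e using half_step[OF IH(1,2) ci d1] by auto
    show "real (outdeg mu E v) / 2 ^ Suc i - 1 \<le> real (outdeg mu E2 v)"
         "real (outdeg mu E2 v) \<le> real (outdeg mu E v) / 2 ^ Suc i + 1"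
      unfolding e using half_step[OF IH(3,4) co d2] by auto
  qed
qed

theorem lemma4p8:
  fixes V :: "'a set" and E :: "'a set set" and mu :: "'a set \<Rightarrow> 'a \<times> 'a"
    and h i :: nat and F :: "'a set set" and v :: 'a
  assumes "simple_graph V E"
    and "orientation E mu"
    and "\<forall>u\<in>V. outdeg mu E u \<le> 2 * arboricity V E"
    and "real h \<le> log 2 (real (arboricity V E))"
    and "i \<le> h"
    and "computed_at_level V E mu i F"
    and "v \<in> V"
  shows "real (indeg mu E v) / 2 ^ i - 1 \<le> real (indeg mu F v) \<and>
         real (indeg mu F v) \<le> real (indeg mu E v) / 2 ^ i + 1 \<and>
         real (outdeg mu E v) / 2 ^ i - 1 \<le> real (outdeg mu F v) \<and>
         real (outdeg mu F v) \<le> real (outdeg mu E v) / 2 ^ i + 1"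
proof -
  have "E \<subseteq> Pow V" "finite V" using assms(1) unfolding simple_graph_def by auto
  then have fE: "finite E" by (meson finite_Pow_iff finite_subset)
  show ?thesis using main_ind[OF assms(6) fE] assms(7) by blast
qed

end
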